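(* There is an absolute constant $C$ such that for all integers $1\le r\le n$ and every graded function $f:\mathbb{I}_n^r\to\mathbb{R}^+$, there exists a real matrix $A$ with $n$ columns and at most $Cnr$ rows such that $\mu_A(J)=f(J)$ for all $J\in\mathbb{I}_n^r$.
   Context: $\mathbb{R}^+$ denotes the positive reals. For integers $i\le j$, $[i:j]=\{i,\dots,j\}$. For integers $r\le n$, $\mathbb{I}_n^r=\{[i:j]:1\le i\le j\le n,\ j<i+r\}$, and $\mathbb{I}_n=\mathbb{I}_n^n$. A function $f:\mathbb{I}_n^r\to\mathbb{R}^+$ is graded if for all $J,J'\in\mathbb{I}_n^r$ with $|J|<|J'|$ one has $f(J)/|J|>f(J')/|J'|$. For a matrix $A=[a_{ij}]$ with $n$ columns, its column-interval maximum prefix sum is $\mu_A:\mathbb{I}_n\to\mathbb{R}$, $\mu_A(J)=\max_{k\ge1}\sum_{i=1}^k\sum_{j\in J}a_{ij}$ (maximum over $k$ ranging over the row indices). *)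

theory Defs
  imports "HOL-Analysis.Analysis"
begin

definition intervals :: "nat \<Rightarrow> nat \<Rightarrow> nat set set" where
  "intervals n r = {{i..j} | i j. 1 \<le> i \<and> i \<le> j \<and> j \<le> n \<and> j < i + r}"

definition graded :: "nat \<Rightarrow> nat \<Rightarrow> (nat set \<Rightarrow> real) \<Rightarrow> bool" where
  "graded n r f \<longleftrightarrow>
     (\<forall>J\<in>intervals n r. \<forall>J'\<in>intervals n r. card J < card J' \<longrightarrow>
        f J / real (card J) > f J' / real (card J'))"

definition mu :: "nat \<Rightarrow> (nat \<Rightarrow> nat \<Rightarrow> real) \<Rightarrow> nat set \<Rightarrow> real" where
  "mu m A J = Max {(\<Sum>i\<in>{1..k}. \<Sum>j\<in>J. A i j) | k. 1 \<le> k \<and> k \<le> m}"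

end

theory Submission
  imports Defs
begin

lemma intervals_sub:
  "intervals n r \<subseteq> (\<lambda>(i,d). {i..i+d}) ` ({1..n} \<times> {..<r})"
proof
  fix K assume "K \<in> intervals n r"
  then obtain i j where K: "K = {i..j}" "1 \<le> i" "i \<le> j" "j \<le> n" "j < i + r"
    unfolding intervals_def by blast
  then have "K = (\<lambda>(i,d). {i..i+d}) (i, j - i)" "(i, j - i) \<in> {1..n} \<times> {..<r}" by auto
  then show "K \<in> (\<lambda>(i,d). {i..i+d}) ` ({1..n} \<times> {..<r})" by blast
qed

lemma intervals_finite: "finite (intervals n r)"
  by (rule finite_subset[OF intervals_sub]) auto

lemma intervals_card: "card (intervals n r) \<le> n * r"
proof -
  have "card (intervals n r) \<le> card ((\<lambda>(i,d). {i..i+d}) ` ({1..n} \<times> {..<r}))"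
    by (rule card_mono[OF _ intervals_sub]) auto
  also have "\<dots> \<le> card ({1..n} \<times> {..<r})" by (rule card_image_le) auto
  finally show ?thesis by (simp add: card_cartesian_product)
qed

lemma intervals_elem: "K \<in> intervals n r \<Longrightarrow> finite K \<and> card K > 0"
  unfolding intervals_def by auto

lemma key_ineq:
  assumes pos: "\<forall>J\<in>intervals n r. f J > 0" and gr: "graded n r f"
    and K: "K \<in> intervals n r" and J: "J \<in> intervals n r"
  shows "(\<Sum>j\<in>J. if j \<in> K then f K / real (card K) else - f K) \<le> f J"
    and "J = K \<Longrightarrow> (\<Sum>j\<in>J. if j \<in> K then f K / real (card K) else - f K) = f J"
proof -
  have fK: "finite K" "card K > 0" using intervals_elem[OF K] by auto
  have fJ: "finite J" "card J > 0" using intervals_elem[OF J] by auto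
  have fKp: "f K > 0" "f J > 0" using pos K J by auto
  have split: "(\<Sum>j\<in>J. if j \<in> K then f K / real (card K) else - f K)
      = real (card (J \<inter> K)) * (f K / real (card K)) - real (card (J - K)) * f K"
  proof -
    have "(\<Sum>j\<in>J. if j \<in> K then f K / real (card K) else - f K)
       = (\<Sum>j\<in>J \<inter> K. f K / real (card K)) + (\<Sum>j\<in>J - K. - f K)"
      using fJ(1) by (simp add: sum.If_cases Diff_eq)
    then show ?thesis by simp
  qed
  have cK: "real (card K) \<noteq> 0" using fK(2) by (simp only: of_nat_eq_0_iff)
  show "J = K \<Longrightarrow> (\<Sum>j\<in>J. if j \<in> K then f K / real (card K) else - f K) = f J"
    using split cK by simp
  show "(\<Sum>j\<in>J. if j \<in> K then f K / real (card K) else - f K) \<le> f J"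
  proof (cases "J \<subseteq> K")
    case True
    then have e: "J \<inter> K = J" "J - K = {}" by auto
    show ?thesis
    proof (cases "J = K")
      case True then show ?thesis using split cK by simp
    next
      case False
      then have "card J < card K" using \<open>J \<subseteq> K\<close> fK by (simp add: psubset_card_mono)
      then have "f K / real (card K) < f J / real (card J)"
        using gr J K unfolding graded_def by blast
      then have "real (card J) * (f K / real (card K)) < real (card J) * (f J / real (card J))"
        using fJ by (intro mult_strict_left_mono) auto
      moreover have cJ: "real (card J) \<noteq> 0" using fJ(2) by (simp only: of_nat_eq_0_iff)
      moreover have "real (card J) * (f J / real (card J)) = f J" using cJ by simp
      moreover have "(\<Sum>j\<in>J. if j \<in> K then f K / real (card K) else - f K)
          = real (card J) * (f K / real (card K))" using split e by simp
      ultimately show ?thesis by linarith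
    qed
  next
    case False
    then have "card (J - K) \<ge> 1" using fJ(1)
      by (metis Diff_eq_empty_iff card_0_eq finite_Diff less_one not_le)
    moreover have "card (J \<inter> K) \<le> card K" using fK by (simp add: card_mono)
    ultimately have a: "real (card (J - K)) * f K \<ge> f K" and
      b: "real (card (J \<inter> K)) * (f K / real (card K)) \<le> f K"
      using fKp fK by (auto simp: field_simps)
    show ?thesis using split a b fKp by linarith
  qed
qed

theorem lemma6p5:
  shows "\<exists>C::real. \<forall>n r::nat. \<forall>f::nat set \<Rightarrow> real.
     1 \<le> r \<and> r \<le> n \<and> (\<forall>J\<in>intervals n r. f J > 0) \<and> graded n r f \<longrightarrow>
     (\<exists>(m::nat) (A::nat \<Rightarrow> nat \<Rightarrow> real). 1 \<le> m \<and> real m \<le> C * real n * real r \<and>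
        (\<forall>J\<in>intervals n r. mu m A J = f J))"
proof (rule exI[of _ 1], intro allI impI)
  fix n r :: nat and f :: "nat set \<Rightarrow> real"
  assume H: "1 \<le> r \<and> r \<le> n \<and> (\<forall>J\<in>intervals n r. f J > 0) \<and> graded n r f"
  define m where "m = card (intervals n r)"
  obtain e where e: "bij_betw e {1..m} (intervals n r)"
    using ex_bij_betw_nat_finite_1[OF intervals_finite] unfolding m_def by blast
  define P where "P k j = (if k = 0 then 0 else
      (if j \<in> e k then f (e k) / real (card (e k)) else - f (e k)))" for k j
  define A where "A i j = P i j - P (i - 1) j" for i j
  have tel: "(\<Sum>i\<in>{1..k}. A i j) = P k j" for k j
    by (induction k) (auto simp: A_def P_def)
  have one: "{1..1} \<in> intervals n r"
  proof -
    have "(1::nat) \<le> 1" "(1::nat) \<le> n" "(1::nat) < 1 + r" using H by auto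
    then show ?thesis unfolding intervals_def by blast
  qed
  have ne: "intervals n r \<noteq> {}" using one by blast
  have m1: "1 \<le> m" unfolding m_def using ne intervals_finite[of n r]
    by (simp add: Suc_le_eq card_gt_0_iff)
  show "\<exists>(m::nat) (A::nat \<Rightarrow> nat \<Rightarrow> real). 1 \<le> m \<and> real m \<le> 1 * real n * real r \<and>
        (\<forall>J\<in>intervals n r. mu m A J = f J)"
  proof (rule exI[of _ m], rule exI[of _ A], intro conjI ballI)
    show "1 \<le> m" by (rule m1)
    show "real m \<le> 1 * real n * real r"
      using intervals_card[of n r] unfolding m_def by (simp flip: of_nat_mult)
    fix J assume J: "J \<in> intervals n r"
    have S: "{(\<Sum>i\<in>{1..k}. \<Sum>j\<in>J. A i j) | k. 1 \<le> k \<and> k \<le> m}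
        = (\<lambda>k. \<Sum>j\<in>J. P k j) ` {1..m}"
    proof -
      have "(\<Sum>i\<in>{1..k}. \<Sum>j\<in>J. A i j) = (\<Sum>j\<in>J. P k j)" for k
        by (subst sum.swap) (rule sum.cong[OF refl], rule tel)
      then show ?thesis by auto
    qed
    have le: "(\<Sum>j\<in>J. P k j) \<le> f J" if "k \<in> {1..m}" for k
    proof -
      have "e k \<in> intervals n r" using e that by (auto simp: bij_betw_def)
      moreover have "k \<noteq> 0" using that by auto
      ultimately show ?thesis using key_ineq(1)[of n r f "e k" J] H J by (simp add: P_def)
    qed
    have "J \<in> e ` {1..m}" using e J by (simp add: bij_betw_def)
    then obtain k where k: "k \<in> {1..m}" "e k = J" by blast
    have eq: "(\<Sum>j\<in>J. P k j) = f J"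
      using key_ineq(2)[of n r f J J] H J k by (simp add: P_def)
    have "Max ((\<lambda>k. \<Sum>j\<in>J. P k j) ` {1..m}) = f J"
    proof (rule Max_eqI)
      show "f J \<in> (\<lambda>k. \<Sum>j\<in>J. P k j) ` {1..m}"
        using eq k(1) by (metis image_eqI)
    qed (use le in auto)
    then show "mu m A J = f J" unfolding mu_def S .
  qed
qed

end
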